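(* Let $N$ be a Poisson process on $[0,\infty)$ with intensity $\lambda>0$, with points $0<X_1<X_2<\cdots$, and let $\epsilon>0$. For $n\ge0$ let $p_n(x)=\Pr(\beta_0(x)=n)$, $x\ge0$. Then for every integer $n\ge 0$ and every $s>0$, $$\int_0^\infty e^{-sx}p_n(x)\,dx=\frac{\lambda^n\, e^{(\lambda+s)\epsilon}}{\left(s\,e^{(\lambda+s)\epsilon}+\lambda\right)^{n+1}}.$$
   Context: A cluster is a maximal set of consecutive points $X_j,\dots,X_k$ with $X_{l+1}-X_l\le\epsilon$ for $j\le l<k$. Clusters are numbered from left to right; the end of the $i$-th cluster is $E_i=X_k+\epsilon$, where $X_k$ is its last point. The number of (complete) clusters in $[0,x]$ is $\beta_0(x)=\#\{i\ge1: E_i\le x\}$. *)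

theory Defs
  imports "HOL-Probability.Probability"
begin

text \<open>Points of the process built from inter-arrival times T 0, T 1, ...:
  pp_point T k = X_k = T 0 + ... + T (k-1), so X_1 = T 0 and X_(k+1) - X_k = T k.\<close>
definition pp_point :: "(nat \<Rightarrow> real) \<Rightarrow> nat \<Rightarrow> real" where
  "pp_point T k = (\<Sum>i<k. T i)"

text \<open>Point X_k (k >= 1) is the last point of a cluster iff the next gap exceeds eps;
  the end of that cluster is then X_k + eps.\<close>
definition is_cluster_last :: "real \<Rightarrow> (nat \<Rightarrow> real) \<Rightarrow> nat \<Rightarrow> bool" where
  "is_cluster_last eps X k \<longleftrightarrow> 1 \<le> k \<and> X (Suc k) - X k > eps"

definition beta0 :: "real \<Rightarrow> (nat \<Rightarrow> real) \<Rightarrow> real \<Rightarrow> nat" where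
  "beta0 eps X x = card {k. is_cluster_last eps X k \<and> X k + eps \<le> x}"

end

theory Submission
  imports Defs
begin


definition cntf :: "real \<Rightarrow> (nat \<Rightarrow> real) \<Rightarrow> nat \<Rightarrow> nat" where
  "cntf e t k = card {j\<in>{1..<k}. e < t j}"

lemma pp_Suc: "pp_point t (Suc k) = pp_point t k + t k"
  by (simp add: pp_point_def)

lemma pp_mono: assumes "\<And>i. 0 \<le> t i" "j \<le> k" shows "pp_point t j \<le> pp_point t k"
  unfolding pp_point_def using assms by (intro sum_mono2) auto

lemma pp_nonneg: assumes "\<And>i. 0 \<le> t i" shows "0 \<le> pp_point t k"
  unfolding pp_point_def using assms by (intro sum_nonneg) auto

lemma is_cluster_last_iff: "is_cluster_last e (pp_point t) k \<longleftrightarrow> 1 \<le> k \<and> e < t k"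
  by (simp add: is_cluster_last_def pp_Suc)

lemma cntf_Suc: "cntf e t (Suc k) = cntf e t k + (if 1 \<le> k \<and> e < t k then 1 else 0)"
proof -
  have "{j\<in>{1..<Suc k}. e < t j} = {j\<in>{1..<k}. e < t j} \<union> (if 1 \<le> k \<and> e < t k then {k} else {})"
    by (cases "1 \<le> k") (auto simp: less_Suc_eq_le le_less)
  then show ?thesis unfolding cntf_def by (auto simp: card_insert_if)
qed

lemma cntf_le: "cntf e t k \<le> k - 1"
proof -
  have "cntf e t k \<le> card {1..<k}" unfolding cntf_def by (intro card_mono) auto
  then show ?thesis by simp
qed

lemma fin_S:
  assumes nn: "\<And>i. 0 \<le> t i" and inf: "infinite {k. e < t k}" and e: "e > 0"
  shows "finite {k. 1 \<le> k \<and> e < t k \<and> pp_point t k + e \<le> x}"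
proof -
  define N where "N = nat \<lceil>x / e\<rceil>"
  have N: "x \<le> real N * e"
  proof -
    have "x / e \<le> real N" unfolding N_def by linarith
    then show ?thesis using e by (simp add: field_simps)
  qed
  obtain F where F: "F \<subseteq> {k. e < t k}" "finite F" "card F = N"
    using infinite_arbitrarily_large[OF inf] by blast
  define K where "K = Suc (Max (insert 0 F))"
  have "pp_point t k + e > x" if "K \<le> k" for k
  proof -
    have Fk: "F \<subseteq> {..<k}"
    proof
      fix i assume "i \<in> F"
      hence "i \<le> Max (insert 0 F)" using F(2) by simp
      thus "i \<in> {..<k}" using that unfolding K_def by simp
    qed
    have "real N * e = (\<Sum>i\<in>F. e)" using F by simp
    also have "\<dots> \<le> (\<Sum>i\<in>F. t i)" using F(1) by (intro sum_mono) auto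
    also have "\<dots> \<le> pp_point t k" unfolding pp_point_def using Fk nn by (intro sum_mono2) auto
    finally show ?thesis using N e by linarith
  qed
  then have "{k. 1 \<le> k \<and> e < t k \<and> pp_point t k + e \<le> x} \<subseteq> {..<K}"
    by (auto simp: not_le[symmetric])
  then show ?thesis using finite_subset by blast
qed

lemma card_S_ge:
  assumes nn: "\<And>i. 0 \<le> t i" and inf: "infinite {k. e < t k}" and e: "e > 0"
  shows "(Suc m \<le> card {k. is_cluster_last e (pp_point t) k \<and> pp_point t k + e \<le> x}) \<longleftrightarrow>
         (\<exists>k. 1 \<le> k \<and> e < t k \<and> cntf e t k = m \<and> pp_point t k + e \<le> x)"
    (is "?L \<longleftrightarrow> ?R")
proof -
  define S where "S = {k. 1 \<le> k \<and> e < t k \<and> pp_point t k + e \<le> x}"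
  have S_eq: "{k. is_cluster_last e (pp_point t) k \<and> pp_point t k + e \<le> x} = S"
    unfolding S_def is_cluster_last_iff by auto
  have finS: "finite S" unfolding S_def by (rule fin_S[OF nn inf e])
  show ?thesis unfolding S_eq
  proof
    assume L: "Suc m \<le> card S"
    then have "S \<noteq> {}" by auto
    define K where "K = Max S"
    have KS: "K \<in> S" unfolding K_def using finS \<open>S \<noteq> {}\<close> by simp
    have "S \<subseteq> {j\<in>{1..<Suc K}. e < t j}"
    proof
      fix j assume jS: "j \<in> S"
      hence "j \<le> K" unfolding K_def using finS by simp
      thus "j \<in> {j\<in>{1..<Suc K}. e < t j}" using jS unfolding S_def by auto
    qed
    then have "card S \<le> cntf e t (Suc K)" unfolding cntf_def by (intro card_mono) auto
    then have ex: "\<exists>k. Suc m \<le> cntf e t k" using L by (intro exI[of _ "Suc K"]) simp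
    define k0 where "k0 = (LEAST k. Suc m \<le> cntf e t k)"
    have k0: "Suc m \<le> cntf e t k0" unfolding k0_def by (rule LeastI_ex[OF ex])
    have k0le: "k0 \<le> Suc K" unfolding k0_def using \<open>card S \<le> _\<close> L by (intro Least_le) simp
    have "k0 \<noteq> 0"
    proof
      assume "k0 = 0" then show False using k0 by (simp add: cntf_def)
    qed
    then obtain k where k: "k0 = Suc k" by (cases k0) auto
    have "\<not> Suc m \<le> cntf e t k" unfolding k0_def using k k0_def
      using not_less_Least[of k "\<lambda>k. Suc m \<le> cntf e t k"] by simp
    then have ck: "1 \<le> k \<and> e < t k \<and> cntf e t k = m" using k0 unfolding k cntf_Suc
      by (auto split: if_splits)
    have "k \<le> K" using k0le k by simp
    then have "pp_point t k \<le> pp_point t K" by (rule pp_mono[OF nn])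
    with KS have "pp_point t k + e \<le> x" unfolding S_def by simp
    with ck show ?R by blast
  next
    assume ?R
    then obtain k where k: "1 \<le> k" "e < t k" "cntf e t k = m" "pp_point t k + e \<le> x" by blast
    have "insert k {j\<in>{1..<k}. e < t j} \<subseteq> S"
    proof
      fix j assume j: "j \<in> insert k {j\<in>{1..<k}. e < t j}"
      then have "j \<le> k" by auto
      then have "pp_point t j \<le> pp_point t k" by (rule pp_mono[OF nn])
      then show "j \<in> S" using j k unfolding S_def by auto
    qed
    then have "card (insert k {j\<in>{1..<k}. e < t j}) \<le> card S" using finS by (rule card_mono[rotated])
    then show "Suc m \<le> card S" using k unfolding cntf_def by simp
  qed
qed


lemma binom_series:
  fixes z :: real
  assumes "0 \<le> z" "z < 1"
  shows "(\<lambda>j. real ((j + m) choose m) * z ^ j) sums (1 / (1 - z) ^ Suc m)"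
proof -
  have "\<bar>- z\<bar> < 1" using assms by simp
  from gen_binomial_real[OF this, of "- (real m + 1)"]
  have "(\<lambda>n. (- (real m + 1) gchoose n) * (- z) ^ n) sums (1 + - z) powr (- (real m + 1))" .
  moreover have "(- (real m + 1) gchoose n) * (- z) ^ n = real ((n + m) choose m) * z ^ n" for n
  proof -
    have "(- (real m + 1) gchoose n) = (-1) ^ n * (real (n + m) gchoose n)"
      by (subst gbinomial_negated_upper) (simp add: algebra_simps)
    also have "real (n + m) gchoose n = real ((n + m) choose n)"
      by (simp add: binomial_gbinomial)
    also have "(n + m) choose n = (n + m) choose m"
      using binomial_symmetric[of n "n + m"] by simp
    finally have 1: "(- (real m + 1) gchoose n) = (-1) ^ n * real ((n + m) choose m)" .
    have 2: "(- z) ^ n = (-1) ^ n * z ^ n" by (rule power_minus)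
    have 3: "(-1::real) ^ n * (-1) ^ n = 1" by (simp flip: power_add)
    show ?thesis unfolding 1 2 using 3 by (metis (no_types, lifting) mult.assoc mult.commute mult.left_neutral)
  qed
  moreover have "(1 + - z) powr (- (real m + 1)) = 1 / (1 - z) ^ Suc m"
  proof -
    have "(1 + - z) powr (- (real m + 1)) = (1 - z) powr (- real (Suc m))" by (simp add: algebra_simps)
    also have "\<dots> = inverse ((1 - z) powr real (Suc m))" by (rule powr_minus)
    also have "\<dots> = inverse ((1 - z) ^ Suc m)" using assms by (subst powr_realpow) auto
    finally show ?thesis by (simp add: divide_inverse)
  qed
  ultimately show ?thesis by simp
qed

lemma count_expand:
  assumes "finite J"
  shows "(if card {j\<in>J. P j} = m then 1 else 0 :: ennreal)
       = (\<Sum>F\<in>{F. F \<subseteq> J \<and> card F = m}. \<Prod>j\<in>J. if j \<in> F then (if P j then 1 else 0) else (if P j then 0 else 1))"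
proof -
  have "(\<Prod>j\<in>J. if j \<in> F then (if P j then 1 else 0) else (if P j then 0 else 1 :: ennreal))
      = (if F = {j\<in>J. P j} then 1 else 0)" if sub: "F \<subseteq> J" for F
  proof (cases "F = {j\<in>J. P j}")
    case True
    have "\<forall>j\<in>J. (if j \<in> F then (if P j then 1 else 0) else (if P j then 0 else 1 :: ennreal)) = 1"
      using True by auto
    then show ?thesis using True by (simp add: prod.neutral)
  next
    case False
    then obtain j where "j \<in> J" "(j \<in> F) \<noteq> P j" using sub by blast
    then have "\<exists>j\<in>J. (if j \<in> F then (if P j then 1 else 0) else (if P j then 0 else 1 :: ennreal)) = 0"
      by auto
    then show ?thesis using False assms by (simp add: prod_zero_iff)
  qed
  then have "(\<Sum>F\<in>{F. F \<subseteq> J \<and> card F = m}. \<Prod>j\<in>J. if j \<in> F then (if P j then 1 else 0) else (if P j then 0 else 1 :: ennreal))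
      = (\<Sum>F\<in>{F. F \<subseteq> J \<and> card F = m}. if F = {j\<in>J. P j} then 1 else 0)"
    by (intro sum.cong) auto
  also have "\<dots> = (if card {j\<in>J. P j} = m then 1 else 0)"
  proof -
    have fin: "finite {F. F \<subseteq> J \<and> card F = m}"
    proof (rule finite_subset)
      show "{F. F \<subseteq> J \<and> card F = m} \<subseteq> Pow J" by auto
      show "finite (Pow J)" using assms by simp
    qed
    have 1: "(\<Sum>F\<in>{F. F \<subseteq> J \<and> card F = m}. if F = {j\<in>J. P j} then 1 else 0 :: ennreal)
        = (if {j\<in>J. P j} \<in> {F. F \<subseteq> J \<and> card F = m} then 1 else 0)"
      by (rule sum.delta[OF fin])
    have 2: "({j\<in>J. P j} \<in> {F. F \<subseteq> J \<and> card F = m}) = (card {j\<in>J. P j} = m)" by simp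
    show ?thesis unfolding 1 2 ..
  qed
  finally show ?thesis ..
qed


lemma cntf_mono: "k \<le> k' \<Longrightarrow> cntf e t k \<le> cntf e t k'"
  unfolding cntf_def by (intro card_mono) auto

lemma cntf_strict:
  assumes "1 \<le> k" "e < t k" "k < k'"
  shows "cntf e t k < cntf e t k'"
proof -
  have "cntf e t (Suc k) = Suc (cntf e t k)" using assms by (simp add: cntf_Suc)
  moreover have "cntf e t (Suc k) \<le> cntf e t k'" using assms by (intro cntf_mono) simp
  ultimately show ?thesis by simp
qed




locale clus = prob_space M for M :: "'a measure" +
  fixes T :: "nat \<Rightarrow> 'a \<Rightarrow> real" and lam eps :: real
  assumes indep: "indep_vars (\<lambda>_. borel) T UNIV"
    and distr: "\<And>i. distributed M lborel (T i) (exponential_density lam)"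
    and lam: "lam > 0" and eps: "eps > 0"
begin

lemma T_meas[measurable]: "T i \<in> borel_measurable M"
  using distributed_measurable[OF distr[of i]] by simp

lemma X_meas[measurable]: "(\<lambda>\<omega>. pp_point (\<lambda>i. T i \<omega>) k) \<in> borel_measurable M"
  unfolding pp_point_def by measurable

definition cnt :: "nat \<Rightarrow> 'a \<Rightarrow> nat" where
  "cnt k \<omega> = card {j\<in>{1..<k}. eps < T j \<omega>}"

lemma cnt_meas[measurable]: "cnt k \<in> measurable M (count_space UNIV)"
  unfolding cnt_def by measurable

lemma beta_meas: "{\<omega>\<in>space M. beta0 eps (pp_point (\<lambda>i. T i \<omega>)) x = n} \<in> sets M"
  unfolding beta0_def is_cluster_last_def by measurable

lemma indep_prod:
  fixes g :: "nat \<Rightarrow> real \<Rightarrow> ennreal"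
  assumes "finite J" and [measurable]: "\<And>i. g i \<in> borel_measurable borel"
  shows "(\<integral>\<^sup>+\<omega>. (\<Prod>i\<in>J. g i (T i \<omega>)) \<partial>M) = (\<Prod>i\<in>J. \<integral>\<^sup>+\<omega>. g i (T i \<omega>) \<partial>M)"
proof (rule indep_vars_nn_integral[OF assms(1)])
  show "indep_vars (\<lambda>_. borel) (\<lambda>i \<omega>. g i (T i \<omega>)) J"
    by (rule indep_vars_compose2[OF indep_vars_subset[OF indep]]) auto
qed simp

lemma T_pos_AE: "AE \<omega> in M. 0 < T i \<omega>"
proof -
  have "AE \<omega> in M. \<omega> \<in> {\<omega>\<in>space M. 0 < T i \<omega>}"
    by (rule AE_prob_1) (use exponential_distributedD_gt[OF distr[of i] _ lam, of 0] in simp)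
  then show ?thesis by eventually_elim auto
qed

lemma E_gt:
  assumes s: "0 \<le> s" and a: "0 \<le> a"
  shows "(\<integral>\<^sup>+\<omega>. ennreal (exp (- s * T i \<omega>)) * indicator {a<..} (T i \<omega>) \<partial>M)
     = ennreal (lam / (lam + s) * exp (- (lam + s) * a))"
proof -
  have "(\<integral>\<^sup>+\<omega>. ennreal (exp (- s * T i \<omega>)) * indicator {a<..} (T i \<omega>) \<partial>M)
    = (\<integral>\<^sup>+t. ennreal (exponential_density lam t) * (ennreal (exp (- s * t)) * indicator {a<..} t) \<partial>lborel)"
    by (rule distributed_nn_integral[OF distr, symmetric]) measurable
  also have "\<dots> = (\<integral>\<^sup>+t. indicator {a..} t * lam * exp (- (lam + s) * t) \<partial>lborel)"
  proof (rule nn_integral_cong_AE)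
    show "AE t in lborel. ennreal (exponential_density lam t) * (ennreal (exp (- s * t)) * indicator {a<..} t)
       = ennreal (indicator {a..} t * lam * exp (- (lam + s) * t))"
      using AE_lborel_singleton[of a]
    proof eventually_elim
      case (elim t)
      show ?case using elim a lam
        by (auto simp: indicator_def exponential_density_def ennreal_mult'[symmetric] 
             algebra_simps exp_add[symmetric] simp del: ennreal_mult')
    qed
  qed
  also have "\<dots> = ennreal (lam / (lam + s) * exp (- (lam + s) * a))"
  proof -
    have "((\<lambda>t. exp (- (lam + s) * t)) has_integral exp (- (lam + s) * a) / (lam + s)) {a..}"
      by (rule has_integral_exp_minus_to_infinity) (use lam s in simp)
    from has_integral_mult_right[OF this, of lam]
    have "((\<lambda>t. lam * exp (- (lam + s) * t)) has_integral lam / (lam + s) * exp (- (lam + s) * a)) {a..}"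
      by simp
    from nn_integral_has_integral_lebesgue[OF _ this] lam
    show ?thesis by (simp add: mult.assoc)
  qed
  finally show ?thesis .
qed

lemma E_all:
  assumes s: "0 \<le> s"
  shows "(\<integral>\<^sup>+\<omega>. ennreal (exp (- s * T i \<omega>)) \<partial>M) = ennreal (lam / (lam + s))"
proof -
  have "(\<integral>\<^sup>+\<omega>. ennreal (exp (- s * T i \<omega>)) \<partial>M)
      = (\<integral>\<^sup>+\<omega>. ennreal (exp (- s * T i \<omega>)) * indicator {0<..} (T i \<omega>) \<partial>M)"
    using T_pos_AE[of i] by (intro nn_integral_cong_AE) (auto elim!: eventually_mono)
  also have "\<dots> = ennreal (lam / (lam + s))" using E_gt[OF s, of 0] by simp
  finally show ?thesis .
qed

lemma E_le:
  assumes s: "0 \<le> s" and a: "0 \<le> a"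
  shows "(\<integral>\<^sup>+\<omega>. ennreal (exp (- s * T i \<omega>)) * indicator {..a} (T i \<omega>) \<partial>M)
     = ennreal (lam / (lam + s) * (1 - exp (- (lam + s) * a)))"
proof -
  let ?L = "(\<integral>\<^sup>+\<omega>. ennreal (exp (- s * T i \<omega>)) * indicator {..a} (T i \<omega>) \<partial>M)"
  let ?g = "lam / (lam + s) * exp (- (lam + s) * a)"
  have "ennreal (lam / (lam + s)) = (\<integral>\<^sup>+\<omega>. ennreal (exp (- s * T i \<omega>)) * indicator {..a} (T i \<omega>)
       + ennreal (exp (- s * T i \<omega>)) * indicator {a<..} (T i \<omega>) \<partial>M)"
    unfolding E_all[OF s, of i, symmetric]
    by (intro nn_integral_cong) (auto simp: indicator_def)
  also have "\<dots> = ?L + ennreal ?g"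
    by (subst nn_integral_add) (auto simp: E_gt[OF s a, of i, simplified])
  finally have eq: "ennreal (lam / (lam + s)) = ?L + ennreal ?g" .
  have "?L = (?L + ennreal ?g) - ennreal ?g" by simp
  also have "\<dots> = ennreal (lam / (lam + s) - ?g)"
    unfolding eq[symmetric] using lam s by (subst ennreal_minus) auto
  finally show ?thesis by (simp add: algebra_simps)
qed

lemma inf_AE: "AE \<omega> in M. infinite {k. eps < T k \<omega>}"
proof -
  define q where "q = exp (- lam * eps)"
  have q: "0 < q" "q \<le> 1" using lam eps by (auto simp: q_def)
  have null: "{\<omega>\<in>space M. \<forall>k\<ge>m. T k \<omega> \<le> eps} \<in> null_sets M" for m
  proof -
    let ?N = "{\<omega>\<in>space M. \<forall>k\<ge>m. T k \<omega> \<le> eps}"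
    have Nm: "?N \<in> sets M" by measurable
    have bound: "measure M ?N \<le> (1 - q) ^ L" for L
    proof -
      let ?Y = "{\<omega>\<in>space M. \<forall>k\<in>{m..<m+L}. T k \<omega> \<le> eps}"
      have "emeasure M ?Y = (\<integral>\<^sup>+\<omega>. (\<Prod>k\<in>{m..<m+L}. indicator {..eps} (T k \<omega>)) \<partial>M)"
      proof -
        have "emeasure M ?Y = (\<integral>\<^sup>+\<omega>. indicator ?Y \<omega> \<partial>M)"
          by (rule nn_integral_indicator[symmetric]) measurable
        also have "\<dots> = (\<integral>\<^sup>+\<omega>. (\<Prod>k\<in>{m..<m+L}. indicator {..eps} (T k \<omega>)) \<partial>M)"
          by (intro nn_integral_cong) (auto simp: indicator_def prod_zero_iff)
        finally show ?thesis .
      qed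
      also have "\<dots> = (\<Prod>k\<in>{m..<m+L}. \<integral>\<^sup>+\<omega>. indicator {..eps} (T k \<omega>) \<partial>M)"
        by (rule indep_prod) auto
      also have "\<dots> = (\<Prod>k\<in>{m..<m+L}. ennreal (1 - q))"
        using E_le[of 0 eps] eps by (intro prod.cong) (auto simp: q_def)
      also have "\<dots> = ennreal ((1 - q) ^ L)"
        using q by (simp add: prod_ennreal ennreal_power)
      finally have "emeasure M ?Y = ennreal ((1 - q) ^ L)" .
      then have "measure M ?Y = (1 - q) ^ L" using q by (simp add: measure_def)
      moreover have "measure M ?N \<le> measure M ?Y"
        by (intro finite_measure_mono) (auto, measurable)
      ultimately show ?thesis by simp
    qed
    have "(\<lambda>L. (1 - q) ^ L) \<longlonglongrightarrow> 0" using q by (intro LIMSEQ_power_zero) auto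
    then have "measure M ?N \<le> 0"
      using bound by (intro LIMSEQ_le_const) auto
    then have "measure M ?N = 0" by (simp add: order_antisym)
    then show ?thesis using Nm by (simp add: emeasure_eq_measure null_sets_def)
  qed
  have "AE \<omega> in M. \<forall>m. \<omega> \<notin> {\<omega>\<in>space M. \<forall>k\<ge>m. T k \<omega> \<le> eps}"
    using null by (intro AE_all_countable[THEN iffD2] allI AE_not_in) auto
  then show ?thesis
  proof (rule AE_mp, intro AE_I2 impI)
    fix \<omega> assume "\<omega> \<in> space M" "\<forall>m. \<omega> \<notin> {\<omega>\<in>space M. \<forall>k\<ge>m. T k \<omega> \<le> eps}"
    then have "\<forall>m. \<exists>k\<ge>m. eps < T k \<omega>" by (auto simp: not_le)
    then show "infinite {k. eps < T k \<omega>}" by (simp add: infinite_nat_iff_unbounded_le)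
  qed
qed


definition Aset :: "nat \<Rightarrow> nat \<Rightarrow> 'a set" where
  "Aset m k = {\<omega>\<in>space M. eps < T k \<omega> \<and> cntf eps (\<lambda>i. T i \<omega>) k = m}"

lemma Aset_meas[measurable]: "Aset m k \<in> sets M"
  unfolding Aset_def cntf_def by measurable

definition hfun :: "nat set \<Rightarrow> nat \<Rightarrow> real \<Rightarrow> ennreal" where
  "hfun F i t = (if i = 0 then 1 else if i \<in> F then indicator {eps<..} t else indicator {..eps} t)"

definition gfun :: "real \<Rightarrow> nat set \<Rightarrow> nat \<Rightarrow> nat \<Rightarrow> real \<Rightarrow> ennreal" where
  "gfun s F k i t = (if i = k then indicator {eps<..} t else ennreal (exp (- s * t)) * hfun F i t)"

lemma hfun_meas[measurable]: "hfun F i \<in> borel_measurable borel"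
  unfolding hfun_def by measurable

lemma gfun_meas[measurable]: "gfun s F k i \<in> borel_measurable borel"
  unfolding gfun_def by measurable

lemma G_pt:
  assumes s: "0 \<le> s" and k: "1 \<le> k" and \<omega>: "\<omega> \<in> space M"
  shows "indicator (Aset m k) \<omega> * ennreal (exp (- s * (pp_point (\<lambda>i. T i \<omega>) k + eps)))
    = ennreal (exp (- s * eps)) * (\<Sum>F\<in>{F. F \<subseteq> {1..<k} \<and> card F = m}. \<Prod>i\<in>{..k}. gfun s F k i (T i \<omega>))"
proof -
  let ?Fs = "{F. F \<subseteq> {1..<k} \<and> card F = m}"
  let ?E = "\<Prod>i<k. ennreal (exp (- s * T i \<omega>))"
  have e1: "ennreal (exp (- s * (pp_point (\<lambda>i. T i \<omega>) k + eps))) = ennreal (exp (- s * eps)) * ?E"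
  proof -
    have "exp (- s * (pp_point (\<lambda>i. T i \<omega>) k + eps)) = exp (- s * eps) * (\<Prod>i<k. exp (- s * T i \<omega>))"
    proof -
      have "- s * (pp_point (\<lambda>i. T i \<omega>) k + eps) = - s * eps + (\<Sum>i<k. - s * T i \<omega>)"
        unfolding pp_point_def by (simp add: sum_distrib_left algebra_simps)
      then show ?thesis by (simp only: exp_add exp_sum finite_lessThan)
    qed
    then show ?thesis by (simp del: ennreal_mult' add: ennreal_mult prod_nonneg prod_ennreal)
  qed
  have ind: "indicator (Aset m k) \<omega> = indicator {eps<..} (T k \<omega>) * (if cntf eps (\<lambda>i. T i \<omega>) k = m then 1 else (0::ennreal))"
    using \<omega> by (auto simp: Aset_def indicator_def)
  have cnt: "(if cntf eps (\<lambda>i. T i \<omega>) k = m then 1 else (0::ennreal))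
      = (\<Sum>F\<in>?Fs. \<Prod>j\<in>{1..<k}. hfun F j (T j \<omega>))"
    unfolding cntf_def
    by (subst count_expand) (auto intro!: sum.cong prod.cong simp: hfun_def indicator_def)
  have prod: "(\<Prod>i\<in>{..k}. gfun s F k i (T i \<omega>)) = indicator {eps<..} (T k \<omega>) * (?E * (\<Prod>j\<in>{1..<k}. hfun F j (T j \<omega>)))"
    for F
  proof -
    have "(\<Prod>i\<in>{..k}. gfun s F k i (T i \<omega>)) = gfun s F k k (T k \<omega>) * (\<Prod>i<k. gfun s F k i (T i \<omega>))"
      by (simp add: lessThan_Suc_atMost[symmetric] mult.commute)
    also have "(\<Prod>i<k. gfun s F k i (T i \<omega>)) = (\<Prod>i<k. ennreal (exp (- s * T i \<omega>)) * hfun F i (T i \<omega>))"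
      by (intro prod.cong) (auto simp: gfun_def)
    also have "\<dots> = ?E * (\<Prod>i<k. hfun F i (T i \<omega>))"
      by (rule prod.distrib)
    also have "(\<Prod>i<k. hfun F i (T i \<omega>)) = (\<Prod>j\<in>{1..<k}. hfun F j (T j \<omega>))"
    proof -
      have "{..<k} = insert 0 {1..<k}" using k by auto
      then show ?thesis by (simp add: hfun_def)
    qed
    finally show ?thesis by (simp add: gfun_def)
  qed
  show ?thesis
    unfolding e1 ind cnt prod sum_distrib_left[symmetric] by (simp only: mult_ac)
qed


lemma prod_split_cases:
  fixes bb aa :: real
  assumes "F \<subseteq> A" "finite A"
  shows "(\<Prod>i\<in>A. if i \<in> F then bb else aa) = bb ^ card F * aa ^ (card A - card F)"
proof -
  have "(\<Prod>i\<in>A. if i \<in> F then bb else aa) = (\<Prod>i\<in>A \<inter> {x. x \<in> F}. bb) * (\<Prod>i\<in>A \<inter> - {x. x \<in> F}. aa)"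
    by (rule prod.If_cases[OF assms(2)])
  also have "A \<inter> {x. x \<in> F} = F" using assms by auto
  also have "A \<inter> - {x. x \<in> F} = A - F" by auto
  finally show ?thesis using assms by (simp add: card_Diff_subset finite_subset)
qed

lemma G:
  assumes s: "0 \<le> s" and k: "k = j + m + 1"
  shows "(\<integral>\<^sup>+\<omega>. indicator (Aset m k) \<omega> * ennreal (exp (- s * (pp_point (\<lambda>i. T i \<omega>) k + eps))) \<partial>M)
    = ennreal (exp (- s * eps) * (exp (- lam * eps) * (lam / (lam + s) *
        ((lam / (lam + s) * exp (- (lam + s) * eps)) ^ m * (lam / (lam + s) * (1 - exp (- (lam + s) * eps))) ^ j)))
        * real ((j + m) choose m))"
proof -
  define bb where "bb = lam / (lam + s) * exp (- (lam + s) * eps)"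
  define aa where "aa = lam / (lam + s) * (1 - exp (- (lam + s) * eps))"
  define r0 where "r0 = lam / (lam + s)"
  define q where "q = exp (- lam * eps)"
  let ?Fs = "{F. F \<subseteq> {1..<k} \<and> card F = m}"
  have k1: "1 \<le> k" using k by simp
  have "exp (- (lam + s) * eps) \<le> 1" using lam s eps by (simp add: mult_nonpos_nonneg)
  then have nn: "0 \<le> bb" "0 \<le> aa" "0 \<le> r0" "0 \<le> q" using lam s eps
    unfolding bb_def aa_def r0_def q_def by (auto intro!: mult_nonneg_nonneg)
  have fin: "finite ?Fs"
  proof (rule finite_subset)
    show "?Fs \<subseteq> Pow {1..<k}" by auto
  qed simp
  have "(\<integral>\<^sup>+\<omega>. indicator (Aset m k) \<omega> * ennreal (exp (- s * (pp_point (\<lambda>i. T i \<omega>) k + eps))) \<partial>M)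
     = (\<integral>\<^sup>+\<omega>. ennreal (exp (- s * eps)) * (\<Sum>F\<in>?Fs. \<Prod>i\<in>{..k}. gfun s F k i (T i \<omega>)) \<partial>M)"
    by (intro nn_integral_cong G_pt[OF s k1])
  also have "\<dots> = ennreal (exp (- s * eps)) * (\<Sum>F\<in>?Fs. \<integral>\<^sup>+\<omega>. (\<Prod>i\<in>{..k}. gfun s F k i (T i \<omega>)) \<partial>M)"
    by (subst nn_integral_cmult) (auto simp: nn_integral_sum)
  also have "\<dots> = ennreal (exp (- s * eps)) * (\<Sum>F\<in>?Fs. ennreal (q * (r0 * (bb ^ m * aa ^ j))))"
  proof (intro arg_cong2[where f="(*)"] refl sum.cong)
    fix F assume F: "F \<in> ?Fs"
    have ev: "(\<integral>\<^sup>+\<omega>. gfun s F k i (T i \<omega>) \<partial>M) =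
       ennreal (if i = k then q else if i = 0 then r0 else if i \<in> F then bb else aa)" for i
    proof -
      consider "i = k" | "i \<noteq> k" "i = 0" | "i \<noteq> k" "i \<noteq> 0" "i \<in> F" | "i \<noteq> k" "i \<noteq> 0" "i \<notin> F" by blast
      then show ?thesis
      proof cases
        case 1 then show ?thesis using E_gt[of 0 eps i] eps lam by (simp add: gfun_def q_def)
      next
        case 2 then show ?thesis using E_all[OF s, of i] by (simp add: gfun_def hfun_def r0_def)
      next
        case 3 then show ?thesis using E_gt[OF s, of eps i] eps by (simp add: gfun_def hfun_def bb_def)
      next
        case 4 then show ?thesis using E_le[OF s, of eps i] eps by (simp add: gfun_def hfun_def aa_def)
      qed
    qed
    have "(\<integral>\<^sup>+\<omega>. (\<Prod>i\<in>{..k}. gfun s F k i (T i \<omega>)) \<partial>M) = (\<Prod>i\<in>{..k}. \<integral>\<^sup>+\<omega>. gfun s F k i (T i \<omega>) \<partial>M)"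
      by (rule indep_prod) auto
    also have "\<dots> = (\<Prod>i\<in>{..k}. ennreal (if i = k then q else if i = 0 then r0 else if i \<in> F then bb else aa))"
      by (simp add: ev)
    also have "\<dots> = ennreal (\<Prod>i\<in>{..k}. (if i = k then q else if i = 0 then r0 else if i \<in> F then bb else aa))"
      using nn by (intro prod_ennreal) auto
    also have "(\<Prod>i\<in>{..k}. (if i = k then q else if i = 0 then r0 else if i \<in> F then bb else aa))
        = q * (r0 * (\<Prod>i\<in>{1..<k}. if i \<in> F then bb else aa))"
    proof -
      have "{..k} = insert k (insert 0 {1..<k})" using k1 by auto
      moreover have "(\<Prod>i\<in>{1..<k}. (if i = k then q else if i = 0 then r0 else if i \<in> F then bb else aa))
          = (\<Prod>i\<in>{1..<k}. if i \<in> F then bb else aa)" by (intro prod.cong) auto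
      ultimately show ?thesis using k1 by simp
    qed
    also have "(\<Prod>i\<in>{1..<k}. if i \<in> F then bb else aa) = bb ^ m * aa ^ j"
      using F k by (subst prod_split_cases) auto
    finally show "(\<integral>\<^sup>+\<omega>. (\<Prod>i\<in>{..k}. gfun s F k i (T i \<omega>)) \<partial>M) = ennreal (q * (r0 * (bb ^ m * aa ^ j)))" .
  qed
  also have "\<dots> = ennreal (exp (- s * eps)) * (of_nat (card ?Fs) * ennreal (q * (r0 * (bb ^ m * aa ^ j))))"
    by simp
  also have "card ?Fs = (j + m) choose m"
    using n_subsets[of "{1..<k}" m] k by simp
  also have "ennreal (exp (- s * eps)) * (of_nat ((j + m) choose m) * ennreal (q * (r0 * (bb ^ m * aa ^ j))))
      = ennreal (exp (- s * eps) * (q * (r0 * (bb ^ m * aa ^ j))) * real ((j + m) choose m))"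
    using nn by (simp add: ennreal_mult ennreal_of_nat_eq_real_of_nat mult_ac del: ennreal_mult')
  finally show ?thesis unfolding bb_def aa_def r0_def q_def .
qed


definition Bs :: "nat \<Rightarrow> real \<Rightarrow> 'a set" where
  "Bs n x = {\<omega>\<in>space M. n = 0 \<or> (\<exists>k. 1 \<le> k \<and> eps < T k \<omega> \<and> cntf eps (\<lambda>i. T i \<omega>) k = n - 1
      \<and> pp_point (\<lambda>i. T i \<omega>) k + eps \<le> x)}"

lemma Bs_meas[measurable]: "Bs n x \<in> sets M"
  unfolding Bs_def cntf_def by measurable

lemma good_AE: "AE \<omega> in M. (\<forall>i. 0 \<le> T i \<omega>) \<and> infinite {k. eps < T k \<omega>}"
proof -
  have "AE \<omega> in M. \<forall>i. 0 < T i \<omega>" using T_pos_AE by (simp add: AE_all_countable)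
  then show ?thesis using inf_AE by eventually_elim (auto simp: less_imp_le)
qed

lemma Bs_iff:
  assumes "\<omega> \<in> space M" "\<forall>i. 0 \<le> T i \<omega>" "infinite {k. eps < T k \<omega>}"
  shows "\<omega> \<in> Bs n x \<longleftrightarrow> n \<le> beta0 eps (pp_point (\<lambda>i. T i \<omega>)) x"
proof (cases n)
  case 0 then show ?thesis using assms by (simp add: Bs_def)
next
  case (Suc m)
  show ?thesis unfolding beta0_def Suc
    using card_S_ge[of "\<lambda>i. T i \<omega>" eps m x] assms eps by (simp add: Bs_def)
qed

lemma Bs_mono: "x \<le> y \<Longrightarrow> Bs n x \<subseteq> Bs n y"
  unfolding Bs_def by force

lemma prob_beta:
  "measure M {\<omega>\<in>space M. beta0 eps (pp_point (\<lambda>i. T i \<omega>)) x = n} = prob (Bs n x) - prob (Bs (Suc n) x)"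
proof -
  have beta_meas: "{\<omega>\<in>space M. beta0 eps (pp_point (\<lambda>i. T i \<omega>)) x = n} \<in> sets M"
    unfolding beta0_def is_cluster_last_def by measurable
  have "measure M {\<omega>\<in>space M. beta0 eps (pp_point (\<lambda>i. T i \<omega>)) x = n} = prob (Bs n x - Bs (Suc n) x)"
  proof (rule measure_eq_AE)
    show "AE \<omega> in M. (\<omega> \<in> {\<omega>\<in>space M. beta0 eps (pp_point (\<lambda>i. T i \<omega>)) x = n}) = (\<omega> \<in> Bs n x - Bs (Suc n) x)"
      using good_AE
    proof (rule AE_mp, intro AE_I2 impI)
      fix \<omega> assume "\<omega> \<in> space M" "(\<forall>i. 0 \<le> T i \<omega>) \<and> infinite {k. eps < T k \<omega>}"
      then show "(\<omega> \<in> {\<omega>\<in>space M. beta0 eps (pp_point (\<lambda>i. T i \<omega>)) x = n}) = (\<omega> \<in> Bs n x - Bs (Suc n) x)"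
        using Bs_iff[of \<omega> n x] Bs_iff[of \<omega> "Suc n" x] by auto
    qed
  qed (use beta_meas in auto)
  also have "\<dots> = prob (Bs n x) - prob (Bs n x \<inter> Bs (Suc n) x)"
    by (rule finite_measure_Diff') auto
  also have "prob (Bs n x \<inter> Bs (Suc n) x) = prob (Bs (Suc n) x)"
  proof (rule measure_eq_AE)
    show "AE \<omega> in M. (\<omega> \<in> Bs n x \<inter> Bs (Suc n) x) = (\<omega> \<in> Bs (Suc n) x)"
      using good_AE
    proof (rule AE_mp, intro AE_I2 impI)
      fix \<omega> assume "\<omega> \<in> space M" "(\<forall>i. 0 \<le> T i \<omega>) \<and> infinite {k. eps < T k \<omega>}"
      then show "(\<omega> \<in> Bs n x \<inter> Bs (Suc n) x) = (\<omega> \<in> Bs (Suc n) x)"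
        using Bs_iff[of \<omega> n x] Bs_iff[of \<omega> "Suc n" x] by auto
    qed
  qed auto
  finally show ?thesis .
qed


lemma emeasure_Bs_sum:
  "emeasure M (Bs (Suc m) x) = (\<Sum>j. \<integral>\<^sup>+\<omega>. indicator (Aset m (j + m + 1)) \<omega> *
      (if pp_point (\<lambda>i. T i \<omega>) (j + m + 1) + eps \<le> x then 1 else 0) \<partial>M)"
proof -
  define D where "D j = {\<omega>\<in>space M. \<omega> \<in> Aset m (j + m + 1) \<and> pp_point (\<lambda>i. T i \<omega>) (j + m + 1) + eps \<le> x}" for j
  have Dm[measurable]: "D j \<in> sets M" for j unfolding D_def by measurable
  have eq: "Bs (Suc m) x = (\<Union>j. D j)"
  proof (intro equalityI subsetI)
    fix \<omega> assume "\<omega> \<in> Bs (Suc m) x"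
    then obtain k where \<omega>: "\<omega> \<in> space M" and k: "1 \<le> k" "eps < T k \<omega>" "cntf eps (\<lambda>i. T i \<omega>) k = m"
      "pp_point (\<lambda>i. T i \<omega>) k + eps \<le> x" unfolding Bs_def by auto
    have "m \<le> k - 1" using cntf_le[of eps "\<lambda>i. T i \<omega>" k] k by simp
    then have kk: "k = (k - 1 - m) + m + 1" using k by simp
    have "\<omega> \<in> D (k - 1 - m)" unfolding D_def Aset_def using \<omega> k kk by (metis (mono_tags, lifting) mem_Collect_eq)
    then show "\<omega> \<in> (\<Union>j. D j)" by blast
  next
    fix \<omega> assume "\<omega> \<in> (\<Union>j. D j)"
    then obtain j where "\<omega> \<in> D j" by blast
    then show "\<omega> \<in> Bs (Suc m) x" unfolding D_def Aset_def Bs_def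
      by (intro CollectI conjI disjI2 exI[of _ "j + m + 1"]) auto
  qed
  have disj: "disjoint_family D"
  proof (unfold disjoint_family_on_def, intro ballI impI)
    fix j j' :: nat assume "j \<noteq> j'"
    show "D j \<inter> D j' = {}"
    proof (rule ccontr)
      assume "D j \<inter> D j' \<noteq> {}"
      then obtain \<omega> where "\<omega> \<in> D j" "\<omega> \<in> D j'" by blast
      then have a: "eps < T (j + m + 1) \<omega>" "cntf eps (\<lambda>i. T i \<omega>) (j + m + 1) = m"
        "eps < T (j' + m + 1) \<omega>" "cntf eps (\<lambda>i. T i \<omega>) (j' + m + 1) = m"
        unfolding D_def Aset_def by auto
      show False
      proof (cases "j < j'")
        case True
        then show False using cntf_strict[of "j + m + 1" eps "\<lambda>i. T i \<omega>" "j' + m + 1"] a by simp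
      next
        case False
        then have "j' < j" using \<open>j \<noteq> j'\<close> by simp
        then show False using cntf_strict[of "j' + m + 1" eps "\<lambda>i. T i \<omega>" "j + m + 1"] a by simp
      qed
    qed
  qed
  have "emeasure M (Bs (Suc m) x) = (\<Sum>j. emeasure M (D j))"
    unfolding eq by (rule suminf_emeasure[symmetric]) (use disj in auto)
  also have "\<dots> = (\<Sum>j. \<integral>\<^sup>+\<omega>. indicator (Aset m (j + m + 1)) \<omega> *
      (if pp_point (\<lambda>i. T i \<omega>) (j + m + 1) + eps \<le> x then 1 else 0) \<partial>M)"
  proof (intro suminf_cong)
    fix j
    have "emeasure M (D j) = (\<integral>\<^sup>+\<omega>. indicator (D j) \<omega> \<partial>M)" by simp
    also have "\<dots> = (\<integral>\<^sup>+\<omega>. indicator (Aset m (j + m + 1)) \<omega> *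
      (if pp_point (\<lambda>i. T i \<omega>) (j + m + 1) + eps \<le> x then 1 else 0) \<partial>M)"
      by (intro nn_integral_cong) (auto simp: D_def Aset_def indicator_def)
    finally show "emeasure M (D j) = \<dots>" .
  qed
  finally show ?thesis .
qed


lemma inner_x:
  assumes s: "0 < s" and y: "0 \<le> y"
  shows "(\<integral>\<^sup>+x. ennreal (exp (- s * x) * indicator {0..} x) * (c * (if y \<le> x then 1 else 0)) \<partial>lborel)
       = c * ennreal (exp (- s * y) / s)"
proof -
  have "(\<integral>\<^sup>+x. ennreal (exp (- s * x) * indicator {0..} x) * (c * (if y \<le> x then 1 else 0)) \<partial>lborel)
      = (\<integral>\<^sup>+x. c * ennreal (indicator {y..} x * exp (- s * x)) \<partial>lborel)"
    using y by (intro nn_integral_cong) (auto simp: indicator_def mult.commute)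
  also have "\<dots> = c * (\<integral>\<^sup>+x. ennreal (indicator {y..} x * exp (- s * x)) \<partial>lborel)"
    by (rule nn_integral_cmult) measurable
  also have "(\<integral>\<^sup>+x. ennreal (indicator {y..} x * exp (- s * x)) \<partial>lborel) = ennreal (exp (- s * y) / s)"
    by (rule nn_integral_has_integral_lebesgue[OF _ has_integral_exp_minus_to_infinity[OF s]]) auto
  finally show ?thesis .
qed

lemma pair_M_lborel: "pair_sigma_finite M lborel"
  by (simp add: pair_sigma_finite_def sigma_finite_measure_axioms sigma_finite_lborel)

lemma lap_sum:
  assumes s: "0 < s"
  shows "(\<integral>\<^sup>+x. ennreal (exp (- s * x) * indicator {0..} x) * emeasure M (Bs (Suc m) x) \<partial>lborel)
   = (\<Sum>j. \<integral>\<^sup>+\<omega>. indicator (Aset m (j + m + 1)) \<omega> * ennreal (exp (- s * (pp_point (\<lambda>i. T i \<omega>) (j + m + 1) + eps)) / s) \<partial>M)"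
proof -
  let ?w = "\<lambda>x. ennreal (exp (- s * x) * indicator {0..} x)"
  let ?h = "\<lambda>j \<omega> x. indicator (Aset m (j + m + 1)) \<omega> *
      (if pp_point (\<lambda>i. T i \<omega>) (j + m + 1) + eps \<le> x then 1 else (0::ennreal))"
  have hm[measurable]: "(\<lambda>(\<omega>, x). ?w x * ?h j \<omega> x) \<in> borel_measurable (M \<Otimes>\<^sub>M lborel)" for j
    by measurable
  have "(\<integral>\<^sup>+x. ?w x * emeasure M (Bs (Suc m) x) \<partial>lborel)
      = (\<integral>\<^sup>+x. (\<Sum>j. \<integral>\<^sup>+\<omega>. ?w x * ?h j \<omega> x \<partial>M) \<partial>lborel)"
    unfolding emeasure_Bs_sum
    by (intro nn_integral_cong) (simp add: nn_integral_cmult[symmetric] ennreal_suminf_cmult[symmetric])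
  also have "\<dots> = (\<Sum>j. \<integral>\<^sup>+x. \<integral>\<^sup>+\<omega>. ?w x * ?h j \<omega> x \<partial>M \<partial>lborel)"
    by (rule nn_integral_suminf) measurable
  also have "\<dots> = (\<Sum>j. \<integral>\<^sup>+\<omega>. \<integral>\<^sup>+x. ?w x * ?h j \<omega> x \<partial>lborel \<partial>M)"
    by (intro suminf_cong pair_sigma_finite.Fubini'[OF pair_M_lborel]) measurable
  also have "\<dots> = (\<Sum>j. \<integral>\<^sup>+\<omega>. indicator (Aset m (j + m + 1)) \<omega> * ennreal (exp (- s * (pp_point (\<lambda>i. T i \<omega>) (j + m + 1) + eps)) / s) \<partial>M)"
  proof (intro suminf_cong nn_integral_cong_AE)
    fix j
    show "AE \<omega> in M. (\<integral>\<^sup>+x. ?w x * ?h j \<omega> x \<partial>lborel) =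
        indicator (Aset m (j + m + 1)) \<omega> * ennreal (exp (- s * (pp_point (\<lambda>i. T i \<omega>) (j + m + 1) + eps)) / s)"
      using good_AE
    proof eventually_elim
      case (elim \<omega>)
      then have "0 \<le> pp_point (\<lambda>i. T i \<omega>) (j + m + 1)" by (intro pp_nonneg) auto
      then show ?case using eps by (intro inner_x[OF s]) auto
    qed
  qed
  finally show ?thesis .
qed


lemma phi_alg:
  assumes s: "0 < s"
  defines "E \<equiv> exp (- (lam + s) * eps)"
  shows "(lam / (lam + s) * E) / (1 - lam / (lam + s) * (1 - E)) = lam / (s * exp ((lam + s) * eps) + lam)"
proof -
  have E: "0 < E" unfolding E_def by simp
  have "E = inverse (exp ((lam + s) * eps))" unfolding E_def by (metis exp_minus minus_mult_left)
  then have e: "exp ((lam + s) * eps) = 1 / E" by (simp add: divide_inverse)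
  have "1 - lam / (lam + s) * (1 - E) = (s + lam * E) / (lam + s)" using lam s by (simp add: field_simps)
  moreover have "0 < s + lam * E" using s lam E by (simp add: add_pos_pos)
  moreover have "lam / (lam + s) * E / ((s + lam * E) / (lam + s)) = lam * E / (s + lam * E)"
  proof -
    have d1: "lam + s \<noteq> 0" using lam s by simp
    have "lam / (lam + s) * E / ((s + lam * E) / (lam + s)) = lam / (lam + s) * E * (lam + s) / (s + lam * E)"
      by (simp add: divide_divide_eq_right)
    also have "lam / (lam + s) * E * (lam + s) = lam * E" using d1 by simp
    finally show ?thesis .
  qed
  moreover have "lam / (s * (1 / E) + lam) = lam * E / (s + lam * E)"
    using E by (simp add: field_simps)
  ultimately show ?thesis unfolding e by simp
qed

lemma lap:
  assumes s: "0 < s"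
  shows "(\<integral>\<^sup>+x. ennreal (exp (- s * x) * indicator {0..} x) * emeasure M (Bs (Suc m) x) \<partial>lborel)
   = ennreal ((lam / (s * exp ((lam + s) * eps) + lam)) ^ Suc m / s)"
proof -
  define bb where "bb = lam / (lam + s) * exp (- (lam + s) * eps)"
  define aa where "aa = lam / (lam + s) * (1 - exp (- (lam + s) * eps))"
  define r0 where "r0 = lam / (lam + s)"
  define q where "q = exp (- lam * eps)"
  define K where "K = exp (- s * eps) * (q * (r0 * bb ^ m)) / s"
  have E1: "exp (- (lam + s) * eps) \<le> 1" using lam s eps by (simp add: mult_nonpos_nonneg)
  have E0: "0 < exp (- (lam + s) * eps)" by simp
  have r01: "r0 \<le> 1" "0 < r0" using lam s by (auto simp: r0_def)
  have aa: "0 \<le> aa" "aa < 1"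
  proof -
    have "0 \<le> 1 - exp (- (lam + s) * eps)" using E1 by simp
    then show "0 \<le> aa" unfolding aa_def r0_def[symmetric] using r01 by simp
    have "aa \<le> 1 - exp (- (lam + s) * eps)" unfolding aa_def r0_def[symmetric]
      using r01 E1 by (simp add: mult_left_le_one_le)
    then show "aa < 1" using E0 by linarith
  qed
  have bb0: "0 \<le> bb" using r01 unfolding bb_def r0_def[symmetric] by simp
  have K0: "0 \<le> K" using s lam unfolding K_def q_def r0_def bb_def by simp
  have tm: "(\<integral>\<^sup>+\<omega>. indicator (Aset m (j + m + 1)) \<omega> * ennreal (exp (- s * (pp_point (\<lambda>i. T i \<omega>) (j + m + 1) + eps)) / s) \<partial>M)
      = ennreal (K * (real ((j + m) choose m) * aa ^ j))" for j
  proof -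
    have "(\<integral>\<^sup>+\<omega>. indicator (Aset m (j + m + 1)) \<omega> * ennreal (exp (- s * (pp_point (\<lambda>i. T i \<omega>) (j + m + 1) + eps)) / s) \<partial>M)
      = (\<integral>\<^sup>+\<omega>. indicator (Aset m (j + m + 1)) \<omega> * ennreal (exp (- s * (pp_point (\<lambda>i. T i \<omega>) (j + m + 1) + eps))) * ennreal (1 / s) \<partial>M)"
      using s by (intro nn_integral_cong) (simp add: ennreal_mult[symmetric] mult.assoc del: ennreal_mult')
    also have "\<dots> = (\<integral>\<^sup>+\<omega>. indicator (Aset m (j + m + 1)) \<omega> * ennreal (exp (- s * (pp_point (\<lambda>i. T i \<omega>) (j + m + 1) + eps))) \<partial>M) * ennreal (1 / s)"
      by (rule nn_integral_multc) measurable
    also have "\<dots> = ennreal (exp (- s * eps) * (q * (r0 * (bb ^ m * aa ^ j))) * real ((j + m) choose m)) * ennreal (1 / s)"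
      unfolding G[OF less_imp_le[OF s] refl] bb_def aa_def r0_def q_def ..
    also have "\<dots> = ennreal (exp (- s * eps) * (q * (r0 * (bb ^ m * aa ^ j))) * real ((j + m) choose m) * (1 / s))"
      using bb0 aa r01 s by (intro ennreal_mult[symmetric]) (auto simp: q_def)
    also have "exp (- s * eps) * (q * (r0 * (bb ^ m * aa ^ j))) * real ((j + m) choose m) * (1 / s)
        = K * (real ((j + m) choose m) * aa ^ j)"
      unfolding K_def by (simp add: field_simps)
    finally show ?thesis .
  qed
  have sums: "(\<lambda>j. K * (real ((j + m) choose m) * aa ^ j)) sums (K * (1 / (1 - aa) ^ Suc m))"
    by (rule sums_mult[OF binom_series[OF aa]])
  have "(\<integral>\<^sup>+x. ennreal (exp (- s * x) * indicator {0..} x) * emeasure M (Bs (Suc m) x) \<partial>lborel)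
      = (\<Sum>j. ennreal (K * (real ((j + m) choose m) * aa ^ j)))"
    unfolding lap_sum[OF s] tm ..
  also have "\<dots> = ennreal (K * (1 / (1 - aa) ^ Suc m))"
    using sums K0 aa by (subst suminf_ennreal2) (auto simp: sums_iff)
  also have "K * (1 / (1 - aa) ^ Suc m) = (bb / (1 - aa)) ^ Suc m / s"
  proof -
    have "exp (- s * eps) * q * r0 = bb"
      unfolding q_def bb_def r0_def by (simp add: exp_add[symmetric] algebra_simps)
    then have "K = bb ^ Suc m / s" unfolding K_def by (simp add: mult_ac)
    then show ?thesis by (simp add: power_divide)
  qed
  also have "bb / (1 - aa) = lam / (s * exp ((lam + s) * eps) + lam)"
    unfolding bb_def aa_def by (rule phi_alg[OF s])
  finally show ?thesis .
qed


lemma hasint: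
  assumes s: "0 < s"
  shows "((\<lambda>x. exp (- s * x) * prob (Bs n x)) has_integral
     ((lam / (s * exp ((lam + s) * eps) + lam)) ^ n / s)) {0..}"
proof (cases n)
  case 0
  have "Bs 0 x = space M" for x by (simp add: Bs_def)
  then have "(\<lambda>x. exp (- s * x) * prob (Bs n x)) = (\<lambda>x. exp (- s * x))" using 0 by (simp add: prob_space)
  then show ?thesis using has_integral_exp_minus_to_infinity[OF s, of 0] 0 by simp
next
  case (Suc m)
  let ?\<phi> = "lam / (s * exp ((lam + s) * eps) + lam)"
  define f where "f x = indicator {0..} x * (exp (- s * x) * prob (Bs n x))" for x
  have mono: "mono (\<lambda>x. prob (Bs n x))"
    by (intro monoI finite_measure_mono Bs_mono) auto
  have fm: "f \<in> borel_measurable borel"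
    unfolding f_def using borel_measurable_mono[OF mono] by measurable
  have "(\<integral>\<^sup>+x. ennreal (f x) \<partial>lborel) = (\<integral>\<^sup>+x. ennreal (exp (- s * x) * indicator {0..} x) * emeasure M (Bs (Suc m) x) \<partial>lborel)"
    unfolding f_def Suc
    by (intro nn_integral_cong) (auto simp: emeasure_eq_measure ennreal_mult[symmetric] indicator_def simp del: ennreal_mult')
  also have "\<dots> = ennreal (?\<phi> ^ n / s)" unfolding lap[OF s] Suc ..
  finally have "(f has_integral (?\<phi> ^ n / s)) UNIV"
    using s lam eps by (intro nn_integral_has_integral[OF fm]) (auto simp: f_def)
  also have "f = (\<lambda>x. if x \<in> {0..} then exp (- s * x) * prob (Bs n x) else 0)"
    by (auto simp: f_def indicator_def)
  finally show ?thesis by (simp only: has_integral_restrict_UNIV)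
qed

end

lemma final_alg:
  fixes lam s e :: real and n :: nat
  assumes "0 < lam" "0 < s" "0 < e"
  shows "(lam / (s * e + lam)) ^ n / s - (lam / (s * e + lam)) ^ Suc n / s
       = lam ^ n * e / (s * e + lam) ^ (n + 1)"
proof -
  define D where "D = s * e + lam"
  have D: "0 < D" using assms by (simp add: D_def add_pos_pos)
  have "(lam / D) ^ n / s - (lam / D) ^ Suc n / s = (lam / D) ^ n * (1 - lam / D) / s"
    by (simp add: algebra_simps diff_divide_distrib)
  also have "1 - lam / D = s * e / D" using D by (simp add: D_def field_simps)
  also have "(lam / D) ^ n * (s * e / D) / s = lam ^ n * e / D ^ (n + 1)"
    using D assms by (simp add: power_divide field_simps)
  finally show ?thesis unfolding D_def .
qed


theorem theorem2:
  fixes M :: "'a measure" and T :: "nat \<Rightarrow> 'a \<Rightarrow> real"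
    and lam eps s :: real and n :: nat
  assumes "prob_space M"
    and "prob_space.indep_vars M (\<lambda>_. borel) T UNIV"
    and "\<And>i. distributed M lborel (T i) (exponential_density lam)"
    and "lam > 0" and "eps > 0" and "s > 0"
  shows "((\<lambda>x. exp (- s * x) *
            measure M {\<omega> \<in> space M. beta0 eps (pp_point (\<lambda>i. T i \<omega>)) x = n})
          has_integral
          (lam ^ n * exp ((lam + s) * eps) / (s * exp ((lam + s) * eps) + lam) ^ (n + 1)))
          {0..}"
proof -
  interpret clus M T lam eps
    using assms by (simp add: clus_def clus_axioms_def)
  let ?\<phi> = "lam / (s * exp ((lam + s) * eps) + lam)"
  have eq: "(\<lambda>x. exp (- s * x) * measure M {\<omega> \<in> space M. beta0 eps (pp_point (\<lambda>i. T i \<omega>)) x = n})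
     = (\<lambda>x. exp (- s * x) * prob (Bs n x) - exp (- s * x) * prob (Bs (Suc n) x))"
    by (simp add: prob_beta algebra_simps)
  have "((\<lambda>x. exp (- s * x) * prob (Bs n x) - exp (- s * x) * prob (Bs (Suc n) x)) has_integral
      (?\<phi> ^ n / s - ?\<phi> ^ Suc n / s)) {0..}"
    by (intro has_integral_diff hasint) (use assms in auto)
  also have "?\<phi> ^ n / s - ?\<phi> ^ Suc n / s
      = lam ^ n * exp ((lam + s) * eps) / (s * exp ((lam + s) * eps) + lam) ^ (n + 1)"
    by (rule final_alg) (use assms in auto)
  finally show ?thesis unfolding eq .
qed

end
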